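(* Let $X\in\Sigma^*$. Then: (Monotonicity) for all $\ell'\le\ell\le r\le r'$ in $[0,|X|]$, $\mathrm{selfed}(X[\ell\,.\,.\,r))\le\mathrm{selfed}(X[\ell'\,.\,.\,r'))$; (Sub-additivity) for every $m\in[0,|X|]$, $\mathrm{selfed}(X)\le\mathrm{selfed}(X[0\,.\,.\,m))+\mathrm{selfed}(X[m\,.\,.\,|X|))$; (Triangle inequality) for every $Y\in\Sigma^*$, $\mathrm{selfed}(Y)\le\mathrm{selfed}(X)+2\,\mathrm{ed}(X,Y)$.
   Context: $X[i\,.\,.\,j)$ denotes the fragment $X[i]\cdots X[j-1]$. $\mathrm{ed}$ is the unweighted (Levenshtein) edit distance. An alignment of $X$ onto $X$ is a monotone lattice path from $(0,0)$ to $(|X|,|X|)$ with steps $(1,0)$, $(0,1)$, $(1,1)$; its unweighted cost counts steps $(1,0)$, $(0,1)$, and steps $(x,y)\to(x+1,y+1)$ with $X[x]\ne X[y]$. A self-alignment of $X$ is such a path that contains no step $(x,x)\to(x+1,x+1)$ (i.e., never aligns a character to itself); $\mathrm{selfed}(X)$ is the minimum unweighted cost of a self-alignment of $X$. *)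

theory Defs
  imports Main
begin

definition frag :: "'a list \<Rightarrow> nat \<Rightarrow> nat \<Rightarrow> 'a list" where
  "frag X i j = take (j - i) (drop i X)"

definition is_step :: "nat \<times> nat \<Rightarrow> nat \<times> nat \<Rightarrow> bool" where
  "is_step p q \<longleftrightarrow> q = (fst p + 1, snd p) \<or> q = (fst p, snd p + 1) \<or> q = (fst p + 1, snd p + 1)"

definition alignment :: "'a list \<Rightarrow> 'a list \<Rightarrow> (nat \<times> nat) list \<Rightarrow> bool" where
  "alignment X Y P \<longleftrightarrow> P \<noteq> [] \<and> hd P = (0, 0) \<and> last P = (length X, length Y) \<and>
     (\<forall>i. Suc i < length P \<longrightarrow> is_step (P ! i) (P ! Suc i))"

definition step_cost :: "'a list \<Rightarrow> 'a list \<Rightarrow> nat \<times> nat \<Rightarrow> nat \<times> nat \<Rightarrow> nat" where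
  "step_cost X Y p q =
     (if q = (fst p + 1, snd p + 1) then (if X ! fst p \<noteq> Y ! snd p then 1 else 0) else 1)"

definition align_cost :: "'a list \<Rightarrow> 'a list \<Rightarrow> (nat \<times> nat) list \<Rightarrow> nat" where
  "align_cost X Y P = (\<Sum>i < length P - 1. step_cost X Y (P ! i) (P ! Suc i))"

definition ed :: "'a list \<Rightarrow> 'a list \<Rightarrow> nat" where
  "ed X Y = (LEAST c. \<exists>P. alignment X Y P \<and> align_cost X Y P = c)"

definition self_alignment :: "'a list \<Rightarrow> (nat \<times> nat) list \<Rightarrow> bool" where
  "self_alignment X P \<longleftrightarrow> alignment X X P \<and>
     (\<forall>i. Suc i < length P \<longrightarrow> \<not> (fst (P ! i) = snd (P ! i) \<and> P ! Suc i = (fst (P ! i) + 1, snd (P ! i) + 1)))"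

definition selfed :: "'a list \<Rightarrow> nat" where
  "selfed X = (LEAST c. \<exists>P. self_alignment X P \<and> align_cost X X P = c)"

end

theory Submission
  imports Defs
begin


definition mb :: "nat \<Rightarrow> nat \<Rightarrow> (nat \<times> nat) set \<Rightarrow> bool" where
  "mb n m M \<longleftrightarrow> M \<subseteq> {..<n} \<times> {..<m} \<and>
     (\<forall>a b c d. (a, b) \<in> M \<longrightarrow> (c, d) \<in> M \<longrightarrow> (a < c \<longleftrightarrow> b < d))"

definition mis :: "'a list \<Rightarrow> 'a list \<Rightarrow> (nat \<times> nat) set \<Rightarrow> (nat \<times> nat) set" where
  "mis X Y M = {p \<in> M. X ! fst p \<noteq> Y ! snd p}"

definition mcost :: "nat \<Rightarrow> nat \<Rightarrow> 'a list \<Rightarrow> 'a list \<Rightarrow> (nat \<times> nat) set \<Rightarrow> nat" where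
  "mcost n m X Y M = n + m + card (mis X Y M) - 2 * card M"

lemma mb_finite: "mb n m M \<Longrightarrow> finite M"
  unfolding mb_def by (meson finite_SigmaI finite_lessThan finite_subset)

lemma mb_eq1: "mb n m M \<Longrightarrow> (a, b) \<in> M \<Longrightarrow> (a, d) \<in> M \<Longrightarrow> b = d"
  unfolding mb_def by (metis less_irrefl nat_neq_iff)

lemma mb_eq2: "mb n m M \<Longrightarrow> (a, b) \<in> M \<Longrightarrow> (c, b) \<in> M \<Longrightarrow> a = c"
  unfolding mb_def by (metis less_irrefl nat_neq_iff)

lemma mb_inj_fst: "mb n m M \<Longrightarrow> inj_on fst M"
  by (auto simp: inj_on_def dest: mb_eq1)

lemma mb_inj_snd: "mb n m M \<Longrightarrow> inj_on snd M"
  by (auto simp: inj_on_def dest: mb_eq2)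

lemma mb_card: "mb n m M \<Longrightarrow> card M \<le> n \<and> card M \<le> m"
proof -
  assume h: "mb n m M"
  have "card M = card (fst ` M)" using mb_inj_fst[OF h] by (simp add: card_image)
  also have "\<dots> \<le> card {..<n}" using h unfolding mb_def by (intro card_mono) auto
  finally have 1: "card M \<le> n" by simp
  have "card M = card (snd ` M)" using mb_inj_snd[OF h] by (simp add: card_image)
  also have "\<dots> \<le> card {..<m}" using h unfolding mb_def by (intro card_mono) auto
  finally have 2: "card M \<le> m" by simp
  from 1 2 show ?thesis by simp
qed

lemma mis_sub: "mis X Y M \<subseteq> M" by (auto simp: mis_def)

lemma mb_mono: "mb n m M \<Longrightarrow> n \<le> n' \<Longrightarrow> m \<le> m' \<Longrightarrow> mb n' m' M"
  unfolding mb_def by fastforce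

lemma mb_empty: "mb n m {}" by (simp add: mb_def)

lemma mb_comp: assumes A: "mb n k A" and B: "mb k m B"
  shows "mb n m (A O B)"
  unfolding mb_def
proof (intro conjI allI impI)
  show "A O B \<subseteq> {..<n} \<times> {..<m}" using A B unfolding mb_def by blast
next
  fix a b c d assume "(a, b) \<in> A O B" "(c, d) \<in> A O B"
  then obtain y y' where "(a, y) \<in> A" "(y, b) \<in> B" "(c, y') \<in> A" "(y', d) \<in> B" by auto
  then show "a < c \<longleftrightarrow> b < d" using A B unfolding mb_def by blast
qed

lemma comp_cost: assumes A: "mb n k A" and B: "mb k m B"
  shows "mcost n m X Z (A O B) \<le> mcost n k X Y A + mcost k m Y Z B"
proof -
  define C where "C = A O B"
  have C: "mb n m C" using mb_comp[OF A B] by (simp add: C_def)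
  define C' where "C' = {(x, y, z). (x, y) \<in> A \<and> (y, z) \<in> B}"
  have fA: "finite A" "finite B" using A B by (auto intro: mb_finite)
  have fC': "finite C'"
  proof -
    have "C' \<subseteq> fst ` A \<times> snd ` A \<times> snd ` B" unfolding C'_def by force
    then show ?thesis using fA by (meson finite_SigmaI finite_imageI finite_subset)
  qed
  have CC': "C = (\<lambda>(x, y, z). (x, z)) ` C'" unfolding C_def C'_def by force
  have inj: "inj_on (\<lambda>(x, y, z). (x, z)) C'"
    unfolding inj_on_def C'_def using mb_eq1[OF A] by auto
  have cC: "card C = card C'" using CC' inj by (simp add: card_image)
  have "snd ` A \<inter> fst ` B = (\<lambda>(x, y, z). y) ` C'" unfolding C'_def by force
  then have i1: "card (snd ` A \<inter> fst ` B) \<le> card C" using cC by (metis card_image_le fC')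
  have u1: "card (snd ` A \<union> fst ` B) \<le> k"
  proof -
    have "snd ` A \<union> fst ` B \<subseteq> {..<k}" using A B unfolding mb_def by auto
    then show ?thesis by (metis card_lessThan card_mono finite_lessThan)
  qed
  have "card (snd ` A) + card (fst ` B) = card (snd ` A \<union> fst ` B) + card (snd ` A \<inter> fst ` B)"
    using fA by (intro card_Un_Int) auto
  moreover have "card (snd ` A) = card A" using mb_inj_snd[OF A] by (simp add: card_image)
  moreover have "card (fst ` B) = card B" using mb_inj_fst[OF B] by (simp add: card_image)
  ultimately have key: "card A + card B \<le> k + card C" using i1 u1 by linarith
  define MA where "MA = {p \<in> C. fst p \<in> fst ` mis X Y A}"
  define MB where "MB = {p \<in> C. snd p \<in> snd ` mis Y Z B}"
  have fCC: "finite C" using C by (rule mb_finite)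
  have "mis X Z C \<subseteq> MA \<union> MB"
  proof
    fix p assume p: "p \<in> mis X Z C"
    obtain x z where pxz: "p = (x, z)" by force
    have "(x, z) \<in> A O B" using p pxz mis_sub unfolding C_def by blast
    then obtain y where y: "(x, y) \<in> A" "(y, z) \<in> B" by blast
    have ne: "X ! x \<noteq> Z ! z" using p pxz unfolding mis_def by auto
    show "p \<in> MA \<union> MB"
    proof (cases "X ! x = Y ! y")
      case True
      then have "(y, z) \<in> mis Y Z B" using ne y unfolding mis_def by auto
      then have "z \<in> snd ` mis Y Z B" by (metis image_eqI snd_conv)
      moreover have "p \<in> C" using p mis_sub by blast
      ultimately show ?thesis using pxz unfolding MB_def by simp
    next
      case False
      then have "(x, y) \<in> mis X Y A" using y unfolding mis_def by auto
      then have "x \<in> fst ` mis X Y A" by (metis image_eqI fst_conv)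
      moreover have "p \<in> C" using p mis_sub by blast
      ultimately show ?thesis using pxz unfolding MA_def by simp
    qed
  qed
  moreover have fMA: "finite MA" "finite MB" using fCC unfolding MA_def MB_def by auto
  ultimately have "card (mis X Z C) \<le> card (MA \<union> MB)" by (intro card_mono) auto
  also have "\<dots> \<le> card MA + card MB" by (rule card_Un_le)
  finally have m1: "card (mis X Z C) \<le> card MA + card MB" .
  have "card MA = card (fst ` MA)"
    using inj_on_subset[OF mb_inj_fst[OF C], of MA] by (simp add: MA_def card_image)
  also have "\<dots> \<le> card (fst ` mis X Y A)"
    by (intro card_mono) (auto simp: MA_def intro: finite_subset[OF mis_sub] fA)
  also have "\<dots> \<le> card (mis X Y A)" by (rule card_image_le) (auto intro: finite_subset[OF mis_sub] fA)
  finally have m2: "card MA \<le> card (mis X Y A)" .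
  have "card MB = card (snd ` MB)"
    using inj_on_subset[OF mb_inj_snd[OF C], of MB] by (simp add: MB_def card_image)
  also have "\<dots> \<le> card (snd ` mis Y Z B)"
    by (intro card_mono) (auto simp: MB_def intro: finite_subset[OF mis_sub] fA)
  also have "\<dots> \<le> card (mis Y Z B)" by (rule card_image_le) (auto intro: finite_subset[OF mis_sub] fA)
  finally have m3: "card MB \<le> card (mis Y Z B)" .
  have b: "card A \<le> n" "card A \<le> k" "card B \<le> k" "card B \<le> m" "card C \<le> n" "card C \<le> m"
    using mb_card[OF A] mb_card[OF B] mb_card[OF C] by auto
  show ?thesis unfolding mcost_def C_def[symmetric] using key m1 m2 m3 b by linarith
qed

lemma mb_conv: "mb n m A \<Longrightarrow> mb m n (A\<inverse>)"
  unfolding mb_def by blast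

lemma conv_cost: assumes A: "mb n m A" shows "mcost m n Y X (A\<inverse>) = mcost n m X Y A"
proof -
  have 1: "card (A\<inverse>) = card A" by (rule card_inverse)
  have "mis Y X (A\<inverse>) = (mis X Y A)\<inverse>" unfolding mis_def by auto
  then have 2: "card (mis Y X (A\<inverse>)) = card (mis X Y A)"
    by (simp add: card_inverse)
  show ?thesis unfolding mcost_def 1 2 by simp
qed



definition galign :: "nat \<Rightarrow> nat \<Rightarrow> (nat \<times> nat) list \<Rightarrow> bool" where
  "galign n m P \<longleftrightarrow> P \<noteq> [] \<and> hd P = (0, 0) \<and> last P = (n, m) \<and>
     (\<forall>i. Suc i < length P \<longrightarrow> is_step (P ! i) (P ! Suc i))"

definition dg :: "nat \<times> nat \<Rightarrow> nat \<times> nat \<Rightarrow> bool" where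
  "dg p q \<longleftrightarrow> q = (fst p + 1, snd p + 1)"

definition diags :: "(nat \<times> nat) list \<Rightarrow> (nat \<times> nat) set" where
  "diags P = {P ! i | i. Suc i < length P \<and> dg (P ! i) (P ! Suc i)}"

lemma nth_last: "length P = Suc k \<Longrightarrow> P ! k = last P"
proof -
  assume k: "length P = Suc k"
  then have "P \<noteq> []" by auto
  then show ?thesis using k by (simp add: last_conv_nth)
qed

lemma cost_snoc: assumes "P \<noteq> []"
  shows "align_cost X Y (P @ [q]) = align_cost X Y P + step_cost X Y (last P) q"
proof -
  obtain k where k: "length P = Suc k" using assms by (cases P) auto
  have "align_cost X Y (P @ [q]) = (\<Sum>i < Suc k. step_cost X Y ((P @ [q]) ! i) ((P @ [q]) ! Suc i))"
    unfolding align_cost_def using k by simp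
  also have "\<dots> = (\<Sum>i < k. step_cost X Y ((P @ [q]) ! i) ((P @ [q]) ! Suc i))
      + step_cost X Y ((P @ [q]) ! k) ((P @ [q]) ! Suc k)" by simp
  also have "(\<Sum>i < k. step_cost X Y ((P @ [q]) ! i) ((P @ [q]) ! Suc i))
      = (\<Sum>i < k. step_cost X Y (P ! i) (P ! Suc i))"
    by (rule sum.cong) (auto simp: nth_append k)
  also have "(P @ [q]) ! k = last P" using k nth_last[OF k] by (simp add: nth_append)
  also have "(P @ [q]) ! Suc k = q" using k by (simp add: nth_append)
  finally show ?thesis unfolding align_cost_def using k by simp
qed

lemma diags_snoc: assumes "P \<noteq> []"
  shows "diags (P @ [q]) = diags P \<union> (if dg (last P) q then {last P} else {})"
proof -
  obtain k where k: "length P = Suc k" using assms by (cases P) auto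
  have lk: "P ! k = last P" using nth_last[OF k] .
  have e1: "\<And>i. i < k \<Longrightarrow> (P @ [q]) ! i = P ! i \<and> (P @ [q]) ! Suc i = P ! Suc i"
    using k by (simp add: nth_append)
  have e2: "(P @ [q]) ! k = P ! k" "(P @ [q]) ! Suc k = q" using k by (simp_all add: nth_append)
  have A: "diags (P @ [q]) = {x. \<exists>i. i < Suc k \<and> x = (P @ [q]) ! i \<and> dg ((P @ [q]) ! i) ((P @ [q]) ! Suc i)}"
    unfolding diags_def using k by auto
  have B: "diags P = {x. \<exists>i. i < k \<and> x = P ! i \<and> dg (P ! i) (P ! Suc i)}"
    unfolding diags_def using k by auto
  show ?thesis
  proof (intro set_eqI iffI)
    fix x assume "x \<in> diags (P @ [q])"
    then obtain i where i: "i < Suc k" "x = (P @ [q]) ! i" "dg ((P @ [q]) ! i) ((P @ [q]) ! Suc i)"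
      using A by auto
    show "x \<in> diags P \<union> (if dg (last P) q then {last P} else {})"
    proof (cases "i < k")
      case True then show ?thesis using i e1[OF True] B by auto
    next
      case False then have "i = k" using i by simp
      then show ?thesis using i e2 lk by auto
    qed
  next
    fix x assume x: "x \<in> diags P \<union> (if dg (last P) q then {last P} else {})"
    show "x \<in> diags (P @ [q])"
    proof (cases "x \<in> diags P")
      case True
      then obtain i where i: "i < k" "x = P ! i" "dg (P ! i) (P ! Suc i)" using B by auto
      then have "x = (P @ [q]) ! i \<and> dg ((P @ [q]) ! i) ((P @ [q]) ! Suc i)" using e1[OF i(1)] by simp
      moreover have "i < Suc k" using i by simp
      ultimately show ?thesis using A by blast
    next
      case False
      then have "x = last P" "dg (last P) q" using x by (auto split: if_splits)
      then show ?thesis using A e2 lk by auto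
    qed
  qed
qed

lemma galign_snoc: assumes "galign n m P" "is_step (n, m) q"
  shows "galign (fst q) (snd q) (P @ [q])"
proof -
  have "\<forall>i. Suc i < length (P @ [q]) \<longrightarrow> is_step ((P @ [q]) ! i) ((P @ [q]) ! Suc i)"
  proof (intro allI impI)
    fix i assume i: "Suc i < length (P @ [q])"
    show "is_step ((P @ [q]) ! i) ((P @ [q]) ! Suc i)"
    proof (cases "Suc i < length P")
      case True then show ?thesis using assms(1) unfolding galign_def by (simp add: nth_append)
    next
      case False
      then have si: "length P = Suc i" using i by simp
      then have "(P @ [q]) ! i = last P" "(P @ [q]) ! Suc i = q"
        using nth_last[OF si] by (auto simp: nth_append)
      then show ?thesis using assms unfolding galign_def by simp
    qed
  qed
  then show ?thesis using assms(1) unfolding galign_def by simp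
qed

lemma galign_butlast: assumes "galign n m (P @ [q])" "P \<noteq> []"
  shows "galign (fst (last P)) (snd (last P)) P \<and> is_step (last P) q \<and> q = (n, m)"
proof -
  obtain k where k: "length P = Suc k" using assms by (cases P) auto
  have st: "\<forall>i. Suc i < length (P @ [q]) \<longrightarrow> is_step ((P @ [q]) ! i) ((P @ [q]) ! Suc i)"
    using assms(1) unfolding galign_def by blast
  have "\<forall>i. Suc i < length P \<longrightarrow> is_step (P ! i) (P ! Suc i)"
  proof (intro allI impI)
    fix i assume "Suc i < length P"
    then show "is_step (P ! i) (P ! Suc i)" using st[rule_format, of i] by (simp add: nth_append)
  qed
  moreover have "is_step (last P) q" using st[rule_format, of k] k nth_last[OF k]
    by (simp add: nth_append)
  moreover have "hd P = (0, 0)" using assms unfolding galign_def by (simp add: hd_append)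
  ultimately show ?thesis using assms unfolding galign_def by simp
qed

lemma mis_ins: "mis X Y (insert p M) = mis X Y M \<union> (if X ! fst p \<noteq> Y ! snd p then {p} else {})"
  unfolding mis_def by auto

lemma L1: "galign n m P \<Longrightarrow> mb n m (diags P) \<and> mcost n m X Y (diags P) \<le> align_cost X Y P"
proof (induction P arbitrary: n m rule: rev_induct)
  case Nil then show ?case by (simp add: galign_def)
next
  case (snoc q P)
  show ?case
  proof (cases "P = []")
    case True
    then have "q = (0, 0)" "n = 0" "m = 0" using snoc.prems by (auto simp: galign_def)
    moreover have "diags [q] = {}" by (simp add: diags_def)
    ultimately show ?thesis using True by (simp add: mb_def mcost_def mis_def)
  next
    case False
    obtain a b where ab: "last P = (a, b)" by force
    have g: "galign a b P" "is_step (a, b) q" "q = (n, m)"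
      using galign_butlast[OF snoc.prems False] ab by auto
    have IH: "mb a b (diags P)" "mcost a b X Y (diags P) \<le> align_cost X Y P"
      using snoc.IH[OF g(1)] by auto
    have cs: "align_cost X Y (P @ [q]) = align_cost X Y P + step_cost X Y (a, b) q"
      using cost_snoc[OF False] ab by simp
    have ds: "diags (P @ [q]) = diags P \<union> (if dg (a, b) q then {(a, b)} else {})"
      using diags_snoc[OF False] ab by simp
    have cb: "card (diags P) \<le> a" "card (diags P) \<le> b" using mb_card[OF IH(1)] by auto
    have fin: "finite (diags P)" using mb_finite[OF IH(1)] .
    from g(2) consider "q = (a + 1, b)" | "q = (a, b + 1)" | "q = (a + 1, b + 1)"
      unfolding is_step_def by auto
    then show ?thesis
    proof cases
      case 1
      then have "\<not> dg (a, b) q" by (simp add: dg_def)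
      then have d: "diags (P @ [q]) = diags P" using ds by simp
      have sc: "step_cost X Y (a, b) q = 1" using 1 by (simp add: step_cost_def)
      have "mb n m (diags P)" using mb_mono[OF IH(1)] g(3) 1 by simp
      moreover have "mcost n m X Y (diags P) = mcost a b X Y (diags P) + 1"
      proof -
        have "2 * card (diags P) \<le> a + b + card (mis X Y (diags P))" using cb by linarith
        moreover have "n + m = Suc (a + b)" using g(3) 1 by simp
        ultimately show ?thesis unfolding mcost_def by (simp add: Suc_diff_le)
      qed
      ultimately show ?thesis using d cs sc IH by simp
    next
      case 2
      then have "\<not> dg (a, b) q" by (simp add: dg_def)
      then have d: "diags (P @ [q]) = diags P" using ds by simp
      have sc: "step_cost X Y (a, b) q = 1" using 2 by (simp add: step_cost_def)
      have "mb n m (diags P)" using mb_mono[OF IH(1)] g(3) 2 by simp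
      moreover have "mcost n m X Y (diags P) = mcost a b X Y (diags P) + 1"
      proof -
        have "2 * card (diags P) \<le> a + b + card (mis X Y (diags P))" using cb by linarith
        moreover have "n + m = Suc (a + b)" using g(3) 2 by simp
        ultimately show ?thesis unfolding mcost_def by (simp add: Suc_diff_le)
      qed
      ultimately show ?thesis using d cs sc IH by simp
    next
      case 3
      then have "dg (a, b) q" by (simp add: dg_def)
      then have d: "diags (P @ [q]) = insert (a, b) (diags P)" using ds by simp
      have nin: "(a, b) \<notin> diags P" using IH(1) unfolding mb_def by auto
      have sc: "step_cost X Y (a, b) q = (if X ! a \<noteq> Y ! b then 1 else 0)"
        using 3 by (simp add: step_cost_def)
      have "mb n m (insert (a, b) (diags P))"
        using IH(1) g(3) 3 unfolding mb_def by fastforce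
      moreover have "card (insert (a, b) (diags P)) = Suc (card (diags P))"
        using nin fin by simp
      moreover have "card (mis X Y (insert (a, b) (diags P))) =
          card (mis X Y (diags P)) + (if X ! a \<noteq> Y ! b then 1 else 0)"
      proof -
        have "(a, b) \<notin> mis X Y (diags P)" using nin mis_sub[of X Y "diags P"] by blast
        moreover have "finite (mis X Y (diags P))" using finite_subset[OF mis_sub fin] .
        ultimately show ?thesis by (simp add: mis_ins)
      qed
      ultimately show ?thesis using d cs sc IH g(3) 3 cb unfolding mcost_def by auto
    qed
  qed
qed



lemma galign_single: "galign 0 0 [(0, 0)]" by (simp add: galign_def)

lemma L2: "mb n m M \<Longrightarrow> \<exists>P. galign n m P \<and> align_cost X Y P \<le> mcost n m X Y M \<and> diags P \<subseteq> M"
proof (induction "n + m" arbitrary: n m M rule: less_induct)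
  case less
  have fin: "finite M" using mb_finite[OF less.prems] .
  show ?case
  proof (cases "n = 0 \<and> m = 0")
    case True
    then have "M = {}" using less.prems unfolding mb_def by auto
    moreover have "align_cost X Y [(0, 0)] = 0" by (simp add: align_cost_def)
    moreover have "diags [(0, 0)] = {}" by (simp add: diags_def)
    ultimately show ?thesis using True galign_single by auto
  next
    case False
    have bnd: "\<And>a b. (a, b) \<in> M \<Longrightarrow> a < n \<and> b < m" using less.prems unfolding mb_def by auto
    have mono: "\<And>a b c d. (a, b) \<in> M \<Longrightarrow> (c, d) \<in> M \<Longrightarrow> (a < c \<longleftrightarrow> b < d)"
      using less.prems unfolding mb_def by blast
    consider (D) "n > 0" "m > 0" "(n - 1, m - 1) \<in> M" | (H) "n > 0" "\<forall>b. (n - 1, b) \<notin> M"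
      | (V) "m > 0" "\<forall>a. (a, m - 1) \<notin> M"
    proof -
      assume hD: "n > 0 \<Longrightarrow> m > 0 \<Longrightarrow> (n - 1, m - 1) \<in> M \<Longrightarrow> thesis"
        and hH: "n > 0 \<Longrightarrow> \<forall>b. (n - 1, b) \<notin> M \<Longrightarrow> thesis"
        and hV: "m > 0 \<Longrightarrow> \<forall>a. (a, m - 1) \<notin> M \<Longrightarrow> thesis"
      show thesis
      proof (cases "n > 0 \<and> m > 0")
        case nm: True
        show thesis
        proof (cases "(n - 1, m - 1) \<in> M")
          case True then show thesis using hD nm by auto
        next
          case notD: False
          show thesis
          proof (cases "\<forall>b. (n - 1, b) \<notin> M")
            case True then show thesis using hH nm by auto
          next
            case False
            then obtain b where b: "(n - 1, b) \<in> M" by auto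
            have "b < m - 1" using bnd[OF b] notD b by (cases "b = m - 1") auto
            have "\<forall>a. (a, m - 1) \<notin> M"
            proof (intro allI notI)
              fix a assume a: "(a, m - 1) \<in> M"
              have "a < n - 1" using bnd[OF a] notD a by (cases "a = n - 1") auto
              then show False using mono[OF a b] \<open>b < m - 1\<close> by simp
            qed
            then show thesis using hV nm by auto
          qed
        qed
      next
        case nm: False
        show thesis
        proof (cases "n = 0")
          case True
          then have "m > 0" using False nm by auto
          moreover have "\<forall>a. (a, m - 1) \<notin> M" using bnd True by auto
          ultimately show thesis using hV by auto
        next
          case n0: False
          then have "m = 0" using nm by auto
          then have "\<forall>b. (n - 1, b) \<notin> M" using bnd by auto
          then show thesis using hH n0 by auto
        qed
      qed
    qed
    then show ?thesis
    proof cases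
      case D
      define M' where "M' = M - {(n - 1, m - 1)}"
      have sub: "\<And>a b. (a, b) \<in> M' \<Longrightarrow> a < n - 1 \<and> b < m - 1"
      proof -
        fix a b assume ab: "(a, b) \<in> M'"
        then have abM: "(a, b) \<in> M" and ne: "(a, b) \<noteq> (n - 1, m - 1)" unfolding M'_def by auto
        have "a \<noteq> n - 1"
        proof
          assume "a = n - 1"
          then show False using mb_eq1[OF less.prems _ D(3), of b] abM ne by auto
        qed
        moreover have "b \<noteq> m - 1"
        proof
          assume "b = m - 1"
          then show False using mb_eq2[OF less.prems _ D(3), of a] abM ne by auto
        qed
        ultimately show "a < n - 1 \<and> b < m - 1" using bnd[OF abM] by auto
      qed
      have mb': "mb (n - 1) (m - 1) M'"
        unfolding mb_def
      proof (intro conjI allI impI subsetI)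
        fix p assume "p \<in> M'"
        then show "p \<in> {..<n - 1} \<times> {..<m - 1}" using sub by (cases p) auto
      next
        fix a b c d assume "(a, b) \<in> M'" "(c, d) \<in> M'"
        then show "(a < c) = (b < d)" using mono unfolding M'_def by blast
      qed
      have "(n - 1) + (m - 1) < n + m" using D by simp
      from less.hyps[OF this mb'] obtain P' where
        P': "galign (n - 1) (m - 1) P'" "align_cost X Y P' \<le> mcost (n - 1) (m - 1) X Y M'" "diags P' \<subseteq> M'"
        by blast
      have ne: "P' \<noteq> []" and lP: "last P' = (n - 1, m - 1)" using P'(1) unfolding galign_def by auto
      have st: "is_step (n - 1, m - 1) (n, m)" using D by (simp add: is_step_def)
      have g: "galign n m (P' @ [(n, m)])" using galign_snoc[OF P'(1) st] by simp
      have dd: "dg (n - 1, m - 1) (n, m)" using D by (simp add: dg_def)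
      have ds: "diags (P' @ [(n, m)]) = insert (n - 1, m - 1) (diags P')"
        using diags_snoc[OF ne] lP dd by simp
      have sc: "step_cost X Y (n - 1, m - 1) (n, m) = (if X ! (n - 1) \<noteq> Y ! (m - 1) then 1 else 0)"
        using D by (simp add: step_cost_def)
      have cs: "align_cost X Y (P' @ [(n, m)]) = align_cost X Y P' + (if X ! (n - 1) \<noteq> Y ! (m - 1) then 1 else 0)"
        using cost_snoc[OF ne, of X Y "(n, m)", unfolded lP sc] .
      have MM: "M = insert (n - 1, m - 1) M'" using D unfolding M'_def by auto
      have nin: "(n - 1, m - 1) \<notin> M'" unfolding M'_def by simp
      have finM': "finite M'" using fin unfolding M'_def by simp
      have c1: "card M = Suc (card M')" using MM nin finM' by simp
      have c2: "card (mis X Y M) = card (mis X Y M') + (if X ! (n - 1) \<noteq> Y ! (m - 1) then 1 else 0)"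
      proof -
        have "(n - 1, m - 1) \<notin> mis X Y M'" using nin mis_sub[of X Y M'] by blast
        moreover have "finite (mis X Y M')" using finite_subset[OF mis_sub finM'] .
        ultimately show ?thesis using MM by (simp add: mis_ins)
      qed
      have cb: "card M' \<le> n - 1" "card M' \<le> m - 1" using mb_card[OF mb'] by auto
      have "align_cost X Y (P' @ [(n, m)]) \<le> mcost n m X Y M"
        using cs c1 c2 cb P'(2) D unfolding mcost_def by linarith
      moreover have "diags (P' @ [(n, m)]) \<subseteq> M" using ds P'(3) MM by auto
      ultimately show ?thesis using g by blast
    next
      case H
      have mb': "mb (n - 1) m M"
        unfolding mb_def
      proof (intro conjI allI impI subsetI)
        fix p assume p: "p \<in> M"
        obtain a b where ab: "p = (a, b)" by force
        have "a \<noteq> n - 1" using H p ab by auto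
        then show "p \<in> {..<n - 1} \<times> {..<m}" using bnd p ab by force
      qed (use mono in blast)
      have "(n - 1) + m < n + m" using H by simp
      from less.hyps[OF this mb'] obtain P' where
        P': "galign (n - 1) m P'" "align_cost X Y P' \<le> mcost (n - 1) m X Y M" "diags P' \<subseteq> M"
        by blast
      have ne: "P' \<noteq> []" and lP: "last P' = (n - 1, m)" using P'(1) unfolding galign_def by auto
      have st: "is_step (n - 1, m) (n, m)" using H by (simp add: is_step_def)
      have g: "galign n m (P' @ [(n, m)])" using galign_snoc[OF P'(1) st] by simp
      have dd: "\<not> dg (n - 1, m) (n, m)" by (simp add: dg_def)
      have ds: "diags (P' @ [(n, m)]) = diags P'" using diags_snoc[OF ne] lP dd by simp
      have sc: "step_cost X Y (n - 1, m) (n, m) = 1" by (simp add: step_cost_def)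
      have cs: "align_cost X Y (P' @ [(n, m)]) = align_cost X Y P' + 1"
        using cost_snoc[OF ne, of X Y "(n, m)", unfolded lP sc] .
      have cb: "card M \<le> n - 1" "card M \<le> m" using mb_card[OF mb'] by auto
      have "align_cost X Y (P' @ [(n, m)]) \<le> mcost n m X Y M"
        using cs cb P'(2) H unfolding mcost_def by linarith
      then show ?thesis using g ds P'(3) by auto
    next
      case V
      have mb': "mb n (m - 1) M"
        unfolding mb_def
      proof (intro conjI allI impI subsetI)
        fix p assume p: "p \<in> M"
        obtain a b where ab: "p = (a, b)" by force
        have "b \<noteq> m - 1" using V p ab by auto
        then show "p \<in> {..<n} \<times> {..<m - 1}" using bnd p ab by force
      qed (use mono in blast)
      have "n + (m - 1) < n + m" using V by simp
      from less.hyps[OF this mb'] obtain P' where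
        P': "galign n (m - 1) P'" "align_cost X Y P' \<le> mcost n (m - 1) X Y M" "diags P' \<subseteq> M"
        by blast
      have ne: "P' \<noteq> []" and lP: "last P' = (n, m - 1)" using P'(1) unfolding galign_def by auto
      have st: "is_step (n, m - 1) (n, m)" using V by (simp add: is_step_def)
      have g: "galign n m (P' @ [(n, m)])" using galign_snoc[OF P'(1) st] by simp
      have dd: "\<not> dg (n, m - 1) (n, m)" by (simp add: dg_def)
      have ds: "diags (P' @ [(n, m)]) = diags P'" using diags_snoc[OF ne] lP dd by simp
      have sc: "step_cost X Y (n, m - 1) (n, m) = 1" by (simp add: step_cost_def)
      have cs: "align_cost X Y (P' @ [(n, m)]) = align_cost X Y P' + 1"
        using cost_snoc[OF ne, of X Y "(n, m)", unfolded lP sc] .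
      have cb: "card M \<le> n" "card M \<le> m - 1" using mb_card[OF mb'] by auto
      have "align_cost X Y (P' @ [(n, m)]) \<le> mcost n m X Y M"
        using cs cb P'(2) V unfolding mcost_def by linarith
      then show ?thesis using g ds P'(3) by auto
    qed
  qed
qed



definition nd :: "(nat \<times> nat) set \<Rightarrow> bool" where "nd M \<longleftrightarrow> (\<forall>a. (a, a) \<notin> M)"

definition sh :: "nat \<Rightarrow> (nat \<times> nat) set \<Rightarrow> (nat \<times> nat) set" where
  "sh k M = (\<lambda>p. (fst p + k, snd p + k)) ` M"

lemma sh_inj: "inj_on (\<lambda>p. (fst p + k, snd p + k)) (M :: (nat \<times> nat) set)"
  by (auto simp: inj_on_def prod_eq_iff)

lemma card_sh: "card (sh k M) = card M"
  unfolding sh_def by (rule card_image[OF sh_inj])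

lemma nd_diags: "nd (diags P) \<longleftrightarrow> (\<forall>i. Suc i < length P \<longrightarrow>
    \<not> (fst (P ! i) = snd (P ! i) \<and> P ! Suc i = (fst (P ! i) + 1, snd (P ! i) + 1)))"
proof
  assume h: "nd (diags P)"
  show "\<forall>i. Suc i < length P \<longrightarrow>
    \<not> (fst (P ! i) = snd (P ! i) \<and> P ! Suc i = (fst (P ! i) + 1, snd (P ! i) + 1))"
  proof (intro allI impI notI)
    fix i assume i: "Suc i < length P" and c: "fst (P ! i) = snd (P ! i) \<and> P ! Suc i = (fst (P ! i) + 1, snd (P ! i) + 1)"
    then have "P ! i \<in> diags P" unfolding diags_def dg_def by blast
    moreover have "P ! i = (fst (P ! i), fst (P ! i))" using c by (metis prod.collapse)
    ultimately show False using h unfolding nd_def by metis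
  qed
next
  assume h: "\<forall>i. Suc i < length P \<longrightarrow>
    \<not> (fst (P ! i) = snd (P ! i) \<and> P ! Suc i = (fst (P ! i) + 1, snd (P ! i) + 1))"
  show "nd (diags P)" unfolding nd_def
  proof (intro allI notI)
    fix a assume "(a, a) \<in> diags P"
    then obtain i where i: "(a, a) = P ! i" "Suc i < length P" "dg (P ! i) (P ! Suc i)"
      unfolding diags_def by blast
    then show False using h unfolding dg_def by (metis fst_conv snd_conv)
  qed
qed

lemma self_iff: "self_alignment X P \<longleftrightarrow> galign (length X) (length X) P \<and> nd (diags P)"
  unfolding self_alignment_def alignment_def galign_def nd_diags by blast

lemma align_iff: "alignment X Y P \<longleftrightarrow> galign (length X) (length Y) P"
  unfolding alignment_def galign_def by simp

lemma S2: assumes "mb (length X) (length X) M" "nd M"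
  shows "selfed X \<le> mcost (length X) (length X) X X M"
proof -
  obtain P where P: "galign (length X) (length X) P" "align_cost X X P \<le> mcost (length X) (length X) X X M"
    "diags P \<subseteq> M" using L2[OF assms(1), of X X] by blast
  have "nd (diags P)" using P(3) assms(2) unfolding nd_def by blast
  then have "self_alignment X P" using P(1) self_iff by blast
  then have "selfed X \<le> align_cost X X P" unfolding selfed_def by (blast intro: Least_le)
  then show ?thesis using P(2) by simp
qed

lemma S1: "\<exists>M. mb (length X) (length X) M \<and> nd M \<and> mcost (length X) (length X) X X M \<le> selfed X"
proof -
  obtain P where P: "galign (length X) (length X) P" "diags P \<subseteq> {}"
    using L2[OF mb_empty, of "length X" "length X" X X] by blast
  have "nd (diags P)" using P(2) unfolding nd_def by blast
  then have "self_alignment X P" using P(1) self_iff by blast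
  then have ex: "\<exists>c P. self_alignment X P \<and> align_cost X X P = c" by blast
  obtain Q where Q: "self_alignment X Q" "align_cost X X Q = selfed X"
    using LeastI_ex[OF ex] unfolding selfed_def by blast
  have g: "galign (length X) (length X) Q" "nd (diags Q)" using Q(1) self_iff by auto
  show ?thesis using L1[OF g(1), of X X] g(2) Q(2) by auto
qed

lemma E1: "\<exists>M. mb (length X) (length Y) M \<and> mcost (length X) (length Y) X Y M \<le> ed X Y"
proof -
  obtain P where P: "galign (length X) (length Y) P"
    using L2[OF mb_empty, of "length X" "length Y" X Y] by blast
  then have ex: "\<exists>c P. alignment X Y P \<and> align_cost X Y P = c" using align_iff by blast
  obtain Q where Q: "alignment X Y Q" "align_cost X Y Q = ed X Y"
    using LeastI_ex[OF ex] unfolding ed_def by blast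
  have g: "galign (length X) (length Y) Q" using Q(1) align_iff by auto
  show ?thesis using L1[OF g, of X Y] Q(2) by auto
qed

lemma triangle: "selfed Y \<le> selfed X + 2 * ed X Y"
proof -
  obtain S where S: "mb (length X) (length X) S" "nd S" "mcost (length X) (length X) X X S \<le> selfed X"
    using S1 by blast
  obtain A where A: "mb (length X) (length Y) A" "mcost (length X) (length Y) X Y A \<le> ed X Y"
    using E1 by blast
  have Ac: "mb (length Y) (length X) (A\<inverse>)" using mb_conv[OF A(1)] .
  have C1: "mb (length Y) (length X) (A\<inverse> O S)" using mb_comp[OF Ac S(1)] .
  have c1: "mcost (length Y) (length X) Y X (A\<inverse> O S) \<le> mcost (length Y) (length X) Y X (A\<inverse>) + mcost (length X) (length X) X X S"
    using comp_cost[OF Ac S(1)] .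
  have C: "mb (length Y) (length Y) ((A\<inverse> O S) O A)" using mb_comp[OF C1 A(1)] .
  have c2: "mcost (length Y) (length Y) Y Y ((A\<inverse> O S) O A) \<le> mcost (length Y) (length X) Y X (A\<inverse> O S) + mcost (length X) (length Y) X Y A"
    using comp_cost[OF C1 A(1)] .
  have c3: "mcost (length Y) (length X) Y X (A\<inverse>) = mcost (length X) (length Y) X Y A"
    using conv_cost[OF A(1)] .
  have ndC: "nd ((A\<inverse> O S) O A)"
    unfolding nd_def
  proof (intro allI notI)
    fix y assume "(y, y) \<in> (A\<inverse> O S) O A"
    then obtain x x' where xx: "(x, y) \<in> A" "(x, x') \<in> S" "(x', y) \<in> A" by blast
    have "x = x'" using mb_eq2[OF A(1) xx(1) xx(3)] .
    then show False using S(2) xx(2) unfolding nd_def by simp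
  qed
  have "selfed Y \<le> mcost (length Y) (length Y) Y Y ((A\<inverse> O S) O A)" using S2[OF C ndC] .
  then show ?thesis using c1 c2 c3 A(2) S(3) by linarith
qed

lemma one_bad:
  assumes M: "mb n m M" and nd: "nd M"
    and ext: "(\<forall>p\<in>M. fst p \<le> t \<and> snd p \<le> t) \<or> (\<forall>p\<in>M. t \<le> fst p \<and> t \<le> snd p)"
  shows "card {p \<in> M. fst p = t \<or> snd p = t} \<le> 1"
proof -
  have fin: "finite {p \<in> M. fst p = t \<or> snd p = t}" using mb_finite[OF M] by simp
  have mono: "\<And>a b c d. (a, b) \<in> M \<Longrightarrow> (c, d) \<in> M \<Longrightarrow> (a < c \<longleftrightarrow> b < d)"
    using M unfolding mb_def by blast
  have cross: False if "(t, b) \<in> M" "(c, t) \<in> M" for b c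
  proof -
    have "b \<noteq> t" "c \<noteq> t" using nd that unfolding nd_def by auto
    from ext show False
    proof
      assume h: "\<forall>p\<in>M. fst p \<le> t \<and> snd p \<le> t"
      have "snd (t, b) \<le> t" "fst (c, t) \<le> t" using h that by blast+
      then have "b < t" "c < t" using \<open>b \<noteq> t\<close> \<open>c \<noteq> t\<close> by simp_all
      then show False using mono[OF that(2) that(1)] by simp
    next
      assume h: "\<forall>p\<in>M. t \<le> fst p \<and> t \<le> snd p"
      have "t \<le> snd (t, b)" "t \<le> fst (c, t)" using h that by blast+
      then have "t < b" "t < c" using \<open>b \<noteq> t\<close> \<open>c \<noteq> t\<close> by simp_all
      then show False using mono[OF that(1) that(2)] by simp
    qed
  qed
  have "\<forall>p\<in>{p \<in> M. fst p = t \<or> snd p = t}. \<forall>q\<in>{p \<in> M. fst p = t \<or> snd p = t}. p = q"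
  proof (intro ballI)
    fix p q assume p: "p \<in> {p \<in> M. fst p = t \<or> snd p = t}" and q: "q \<in> {p \<in> M. fst p = t \<or> snd p = t}"
    obtain a b where ab: "p = (a, b)" by force
    obtain c d where cd: "q = (c, d)" by force
    have pM: "(a, b) \<in> M" and qM: "(c, d) \<in> M" using p q ab cd by auto
    have "a = t \<or> b = t" "c = t \<or> d = t" using p q ab cd by auto
    then show "p = q"
    proof (elim disjE)
      assume "a = t" "c = t" then show ?thesis using mb_eq1[OF M pM, of d] qM ab cd by simp
    next
      assume "a = t" "d = t" then show ?thesis using cross[of b c] pM qM by simp
    next
      assume "b = t" "c = t" then show ?thesis using cross[of d a] pM qM by simp
    next
      assume "b = t" "d = t" then show ?thesis using mb_eq2[OF M pM, of c] qM ab cd by simp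
    qed
  qed
  then have "card {p \<in> M. fst p = t \<or> snd p = t} \<le> Suc 0" using card_le_Suc0_iff_eq[OF fin] by blast
  then show ?thesis by simp
qed



lemma fin_mis: "mb n m M \<Longrightarrow> finite (mis X Y M)"
  using finite_subset[OF mis_sub mb_finite] by blast

lemma R1: "selfed (butlast X) \<le> selfed X"
proof (cases "X = []")
  case True then show ?thesis by simp
next
  case False
  define n where "n = length X"
  have n0: "n > 0" using False n_def by simp
  define B where "B = butlast X"
  have lB: "length B = n - 1" unfolding B_def n_def by simp
  obtain M where M: "mb n n M" "nd M" "mcost n n X X M \<le> selfed X" using S1[of X] n_def by auto
  define M' where "M' = {p \<in> M. fst p < n - 1 \<and> snd p < n - 1}"
  define Bad where "Bad = {p \<in> M. fst p = n - 1 \<or> snd p = n - 1}"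
  have bnd: "\<And>p. p \<in> M \<Longrightarrow> fst p < n \<and> snd p < n" using M(1) unfolding mb_def by auto
  have mb': "mb (n - 1) (n - 1) M'"
    using M(1) unfolding mb_def M'_def by auto
  have nd': "nd M'" using M(2) unfolding nd_def M'_def by auto
  have cBad: "card Bad \<le> 1" unfolding Bad_def
    by (rule one_bad[OF M(1) M(2)]) (use bnd in fastforce)
  have "M \<subseteq> M' \<union> Bad"
  proof
    fix p assume p: "p \<in> M"
    then have "fst p < n" "snd p < n" using bnd by auto
    then show "p \<in> M' \<union> Bad" using p unfolding M'_def Bad_def by auto
  qed
  moreover have "finite M'" "finite Bad" using mb_finite[OF M(1)] unfolding M'_def Bad_def by auto
  ultimately have "card M \<le> card (M' \<union> Bad)" by (intro card_mono) auto
  also have "\<dots> \<le> card M' + card Bad" by (rule card_Un_le)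
  finally have c1: "card M \<le> card M' + 1" using cBad by linarith
  have "mis B B M' = mis X X M'"
    unfolding mis_def M'_def B_def n_def by (auto simp: nth_butlast)
  also have "\<dots> \<subseteq> mis X X M" unfolding mis_def M'_def by auto
  finally have "card (mis B B M') \<le> card (mis X X M)" using fin_mis[OF M(1)] by (intro card_mono) auto
  moreover have "card M' \<le> n - 1" using mb_card[OF mb'] by simp
  moreover have "card M \<le> n" using mb_card[OF M(1)] by simp
  moreover have "selfed B \<le> mcost (n - 1) (n - 1) B B M'" using S2[of B M'] mb' nd' lB by simp
  ultimately have "selfed B \<le> mcost n n X X M" unfolding mcost_def using c1 n0 by linarith
  then show ?thesis using M(3) B_def by simp
qed

lemma R2: "selfed (tl X) \<le> selfed X"
proof (cases "X = []")
  case True then show ?thesis by simp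
next
  case False
  define n where "n = length X"
  have n0: "n > 0" using False n_def by simp
  define T where "T = tl X"
  have lT: "length T = n - 1" unfolding T_def n_def by simp
  obtain M where M: "mb n n M" "nd M" "mcost n n X X M \<le> selfed X" using S1[of X] n_def by auto
  define M' where "M' = {(a, b). (a + 1, b + 1) \<in> M}"
  define Bad where "Bad = {p \<in> M. fst p = 0 \<or> snd p = 0}"
  have bnd: "\<And>p. p \<in> M \<Longrightarrow> fst p < n \<and> snd p < n" using M(1) unfolding mb_def by auto
  have mono: "\<And>a b c d. (a, b) \<in> M \<Longrightarrow> (c, d) \<in> M \<Longrightarrow> (a < c \<longleftrightarrow> b < d)"
    using M(1) unfolding mb_def by blast
  have mb': "mb (n - 1) (n - 1) M'"
    unfolding mb_def
  proof (intro conjI allI impI subsetI)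
    fix p assume "p \<in> M'"
    then obtain a b where "p = (a, b)" "(a + 1, b + 1) \<in> M" unfolding M'_def by auto
    then show "p \<in> {..<n - 1} \<times> {..<n - 1}" using bnd by fastforce
  next
    fix a b c d assume "(a, b) \<in> M'" "(c, d) \<in> M'"
    then have "(a + 1, b + 1) \<in> M" "(c + 1, d + 1) \<in> M" unfolding M'_def by auto
    then show "(a < c) = (b < d)" using mono by fastforce
  qed
  have nd': "nd M'" using M(2) unfolding nd_def M'_def by auto
  have cBad: "card Bad \<le> 1" unfolding Bad_def
    by (rule one_bad[OF M(1) M(2)]) simp
  have "M \<subseteq> sh 1 M' \<union> Bad"
  proof
    fix p assume p: "p \<in> M"
    obtain a b where ab: "p = (a, b)" by force
    show "p \<in> sh 1 M' \<union> Bad"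
    proof (cases "a = 0 \<or> b = 0")
      case True then show ?thesis using p ab unfolding Bad_def by auto
    next
      case False
      then have "(a - 1, b - 1) \<in> M'" using p ab unfolding M'_def by auto
      then have "(a - 1 + 1, b - 1 + 1) \<in> sh 1 M'" unfolding sh_def by force
      then show ?thesis using False ab by simp
    qed
  qed
  moreover have "finite (sh 1 M')" "finite Bad" using mb_finite[OF mb'] mb_finite[OF M(1)]
    unfolding sh_def Bad_def by auto
  ultimately have "card M \<le> card (sh 1 M' \<union> Bad)" by (intro card_mono) auto
  also have "\<dots> \<le> card (sh 1 M') + card Bad" by (rule card_Un_le)
  finally have c1: "card M \<le> card M' + 1" using cBad card_sh[of 1 M'] by linarith
  have "sh 1 (mis T T M') \<subseteq> mis X X M"
  proof
    fix q assume "q \<in> sh 1 (mis T T M')"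
    then obtain a b where q: "q = (a + 1, b + 1)" "(a, b) \<in> mis T T M'" unfolding sh_def by force
    then have ab: "(a + 1, b + 1) \<in> M" "T ! a \<noteq> T ! b" unfolding mis_def M'_def by auto
    then have "a + 1 < n" "b + 1 < n" using bnd by fastforce+
    then have "T ! a = X ! (a + 1)" "T ! b = X ! (b + 1)" unfolding T_def n_def by (simp_all add: nth_tl)
    then show "q \<in> mis X X M" using ab q unfolding mis_def by auto
  qed
  then have "card (sh 1 (mis T T M')) \<le> card (mis X X M)" using fin_mis[OF M(1)] by (intro card_mono) auto
  then have "card (mis T T M') \<le> card (mis X X M)" using card_sh by metis
  moreover have "card M' \<le> n - 1" using mb_card[OF mb'] by simp
  moreover have "card M \<le> n" using mb_card[OF M(1)] by simp
  moreover have "selfed T \<le> mcost (n - 1) (n - 1) T T M'" using S2[of T M'] mb' nd' lT by simp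
  ultimately have "selfed T \<le> mcost n n X X M" unfolding mcost_def using c1 n0 by linarith
  then show ?thesis using M(3) T_def by simp
qed



lemma subadd: assumes m: "m \<le> length X"
  shows "selfed X \<le> selfed (take m X) + selfed (drop m X)"
proof -
  define n where "n = length X"
  define T where "T = take m X"
  define D where "D = drop m X"
  have lT: "length T = m" using m unfolding T_def by simp
  have lD: "length D = n - m" unfolding D_def n_def by simp
  obtain M1 where M1: "mb m m M1" "nd M1" "mcost m m T T M1 \<le> selfed T" using S1[of T] lT by auto
  obtain M2 where M2: "mb (n - m) (n - m) M2" "nd M2" "mcost (n - m) (n - m) D D M2 \<le> selfed D"
    using S1[of D] lD by auto
  define M where "M = M1 \<union> sh m M2"
  have b1: "\<And>a b. (a, b) \<in> M1 \<Longrightarrow> a < m \<and> b < m" using M1(1) unfolding mb_def by auto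
  have b2: "\<And>a b. (a, b) \<in> M2 \<Longrightarrow> a < n - m \<and> b < n - m" using M2(1) unfolding mb_def by auto
  have mo1: "\<And>a b c d. (a, b) \<in> M1 \<Longrightarrow> (c, d) \<in> M1 \<Longrightarrow> (a < c \<longleftrightarrow> b < d)"
    using M1(1) unfolding mb_def by blast
  have mo2: "\<And>a b c d. (a, b) \<in> M2 \<Longrightarrow> (c, d) \<in> M2 \<Longrightarrow> (a < c \<longleftrightarrow> b < d)"
    using M2(1) unfolding mb_def by blast
  have shE: "\<And>a b. (a, b) \<in> sh m M2 \<longleftrightarrow> m \<le> a \<and> m \<le> b \<and> (a - m, b - m) \<in> M2"
  proof
    fix a b assume "(a, b) \<in> sh m M2"
    then obtain p where p: "p \<in> M2" "(a, b) = (fst p + m, snd p + m)" unfolding sh_def by blast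
    then have "a - m = fst p" "b - m = snd p" by auto
    then have "(a - m, b - m) = p" by simp
    then show "m \<le> a \<and> m \<le> b \<and> (a - m, b - m) \<in> M2" using p by auto
  next
    fix a b assume h: "m \<le> a \<and> m \<le> b \<and> (a - m, b - m) \<in> M2"
    then have "(a, b) = (fst (a - m, b - m) + m, snd (a - m, b - m) + m)" by simp
    then show "(a, b) \<in> sh m M2" unfolding sh_def using h by blast
  qed
  have mb: "mb n n M"
    unfolding mb_def
  proof (intro conjI allI impI subsetI)
    fix p assume p: "p \<in> M"
    obtain a b where ab: "p = (a, b)" by force
    show "p \<in> {..<n} \<times> {..<n}"
    proof (cases "p \<in> M1")
      case True then show ?thesis using b1 ab m n_def by fastforce
    next
      case False then have "(a, b) \<in> sh m M2" using p ab M_def by auto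
      then show ?thesis using shE b2 ab by fastforce
    qed
  next
    fix a b c d assume ab: "(a, b) \<in> M" and cd: "(c, d) \<in> M"
    show "(a < c) = (b < d)"
    proof (cases "(a, b) \<in> M1")
      case True
      note t = this
      show ?thesis
      proof (cases "(c, d) \<in> M1")
        case True then show ?thesis using mo1 t by blast
      next
        case False then have "(c, d) \<in> sh m M2" using cd M_def by auto
        then show ?thesis using shE b1[OF t] by auto
      qed
    next
      case False
      then have t: "(a, b) \<in> sh m M2" using ab M_def by auto
      show ?thesis
      proof (cases "(c, d) \<in> M1")
        case True then show ?thesis using shE t b1[OF True] by auto
      next
        case False then have "(c, d) \<in> sh m M2" using cd M_def by auto
        then have "(c - m, d - m) \<in> M2" "m \<le> c" "m \<le> d" "(a - m, b - m) \<in> M2" "m \<le> a" "m \<le> b"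
          using shE t by auto
        then have e: "(a - m < c - m) = (b - m < d - m)" using mo2 by blast
        have "(a < c) = (a - m < c - m)" "(b < d) = (b - m < d - m)"
          using \<open>m \<le> a\<close> \<open>m \<le> b\<close> \<open>m \<le> c\<close> \<open>m \<le> d\<close> by auto
        then show ?thesis using e by simp
      qed
    qed
  qed
  have ndM: "nd M" unfolding nd_def M_def
  proof (intro allI notI)
    fix a assume "(a, a) \<in> M1 \<union> sh m M2"
    then show False using M1(2) M2(2) shE unfolding nd_def by auto
  qed
  have disj: "M1 \<inter> sh m M2 = {}" using b1 shE by fastforce
  have finM1: "finite M1" using mb_finite[OF M1(1)] .
  have finM2: "finite (sh m M2)" using mb_finite[OF M2(1)] unfolding sh_def by simp
  have cM: "card M = card M1 + card M2"
    unfolding M_def using card_Un_disjoint[OF finM1 finM2 disj] card_sh by simp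
  have "mis X X M = mis X X M1 \<union> mis X X (sh m M2)" unfolding mis_def M_def by auto
  moreover have "mis X X M1 = mis T T M1"
    unfolding mis_def T_def using b1 by (auto simp: nth_take)
  moreover have "mis X X (sh m M2) \<subseteq> sh m (mis D D M2)"
  proof
    fix q assume q: "q \<in> mis X X (sh m M2)"
    obtain a b where ab: "q = (a, b)" by force
    then have "m \<le> a" "m \<le> b" "(a - m, b - m) \<in> M2" "X ! a \<noteq> X ! b" using q shE unfolding mis_def by auto
    moreover have "D ! (a - m) = X ! a" "D ! (b - m) = X ! b" using calculation m unfolding D_def by simp_all
    ultimately have "(a - m, b - m) \<in> mis D D M2" unfolding mis_def by simp
    then show "q \<in> sh m (mis D D M2)" using ab \<open>m \<le> a\<close> \<open>m \<le> b\<close> unfolding sh_def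
      by (auto simp: image_iff intro!: bexI[of _ "(a - m, b - m)"])
  qed
  ultimately have sub: "mis X X M \<subseteq> mis T T M1 \<union> sh m (mis D D M2)" by auto
  have "finite (mis T T M1 \<union> sh m (mis D D M2))"
    using fin_mis[OF M1(1), of T T] fin_mis[OF M2(1), of D D] unfolding sh_def by simp
  then have "card (mis X X M) \<le> card (mis T T M1 \<union> sh m (mis D D M2))" using sub by (rule card_mono)
  also have "\<dots> \<le> card (mis T T M1) + card (sh m (mis D D M2))" by (rule card_Un_le)
  finally have "card (mis X X M) \<le> card (mis T T M1) + card (sh m (mis D D M2))" .
  then have cm: "card (mis X X M) \<le> card (mis T T M1) + card (mis D D M2)" using card_sh by metis
  have "card M1 \<le> m" "card M2 \<le> n - m" using mb_card[OF M1(1)] mb_card[OF M2(1)] by auto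
  moreover have "selfed X \<le> mcost n n X X M" using S2[OF _ ndM] mb n_def by simp
  ultimately have "selfed X \<le> mcost m m T T M1 + mcost (n - m) (n - m) D D M2"
    unfolding mcost_def using cM cm m n_def by linarith
  then show ?thesis using M1(3) M2(3) unfolding T_def D_def by linarith
qed

lemma mono_r: assumes "l \<le> r" "r \<le> r'" "r' \<le> length X"
  shows "selfed (frag X l r) \<le> selfed (frag X l r')"
  using assms(2,3)
proof (induction r' rule: dec_induct)
  case base then show ?case by simp
next
  case (step k)
  have "butlast (frag X l (Suc k)) = frag X l k"
    unfolding frag_def using step assms(1) by (simp add: butlast_take)
  then have "selfed (frag X l k) \<le> selfed (frag X l (Suc k))" using R1 by metis
  then show ?case using step by simp
qed

lemma mono_l: assumes "l' \<le> l"
  shows "selfed (frag X l r) \<le> selfed (frag X l' r)"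
  using assms
proof (induction l rule: dec_induct)
  case base then show ?case by simp
next
  case (step k)
  have "tl (frag X k r) = frag X (Suc k) r"
    unfolding frag_def by (simp add: tl_take tl_drop drop_Suc)
  then have "selfed (frag X (Suc k) r) \<le> selfed (frag X k r)" using R2 by metis
  then show ?case using step by simp
qed

lemma part1: "\<forall>l' l r r'. l' \<le> l \<and> l \<le> r \<and> r \<le> r' \<and> r' \<le> length X \<longrightarrow>
            selfed (frag X l r) \<le> selfed (frag X l' r')"
proof (intro allI impI)
  fix l' l r r' assume h: "l' \<le> l \<and> l \<le> r \<and> r \<le> r' \<and> r' \<le> length X"
  then have "selfed (frag X l r) \<le> selfed (frag X l r')" using mono_r by blast
  also have "\<dots> \<le> selfed (frag X l' r')" using mono_l h by blast
  finally show "selfed (frag X l r) \<le> selfed (frag X l' r')" .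
qed

lemma part2: "\<forall>m. m \<le> length X \<longrightarrow> selfed X \<le> selfed (frag X 0 m) + selfed (frag X m (length X))"
proof (intro allI impI)
  fix m assume "m \<le> length X"
  then show "selfed X \<le> selfed (frag X 0 m) + selfed (frag X m (length X))"
    using subadd[of m X] unfolding frag_def by simp
qed

theorem lemma4p2:
  fixes X :: "'a list"
  shows "(\<forall>l' l r r'. l' \<le> l \<and> l \<le> r \<and> r \<le> r' \<and> r' \<le> length X \<longrightarrow>
            selfed (frag X l r) \<le> selfed (frag X l' r'))
       \<and> (\<forall>m. m \<le> length X \<longrightarrow> selfed X \<le> selfed (frag X 0 m) + selfed (frag X m (length X)))
       \<and> (\<forall>Y :: 'a list. selfed Y \<le> selfed X + 2 * ed X Y)"
  using part1[of X] part2[of X] triangle[of _ X] by blast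

end
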